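(* Let $f\in\mathbb{Q}[x]$ have degree $n$ and $g\in\mathbb{Q}[x]$ have degree $\le 2n-2$. Let $Q^*\in S^n(\mathbb{R})$ be positive definite with smallest eigenvalue $\sigma>0$, let $q^*\in\mathbb{R}[x]$ have degree $\le n-2$, and suppose $\rho:=\|\mathbf{x}^TQ^*\mathbf{x}+q^*f-g\|<\sigma$. Let $$0<\delta<\frac{\sigma-\rho}{n+(n-1)\sqrt n\,\|f\|}.$$ Then for every $\overline Q\in S^n(\mathbb{Q})$ and every $q\in\mathbb{Q}[x]$ of degree $\le n-2$ with $|\overline Q_{i,j}-Q^*_{i,j}|\le\delta$ for all $1\le i,j\le n$ and $|q_i-q^*_i|\le\delta$ for all $0\le i\le n-2$ (coefficients of $x^i$), the matrix $Q:=\pi_{g-qf}(\overline Q)\in S^n(\mathbb{Q})$ satisfies $g=\mathbf{x}^TQ\,\mathbf{x}+q\,f$ and is positive definite.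
   Context: $S^n(\mathbb{R})$ (resp. $S^n(\mathbb{Q})$) denotes real (resp. rational) symmetric $n\times n$ matrices; $\mathbf{x}=[1,x,\dots,x^{n-1}]^T$; $\|\cdot\|$ denotes the $2$-norm of the coefficient vector of a polynomial and the Frobenius norm of a matrix. For $p=\sum_{k=0}^{2n-2}p_kx^k$, $Q_p$ is the symmetric Hankel matrix with $(Q_p)_{i,j}=p_{i+j-2}/s_{i+j-2}$, where $s_k=k+1$ for $0\le k\le n-1$ and $s_k=2n-1-k$ for $n-1\le k\le 2n-2$; and $\pi_p(Q)=Q-Q_{\mathbf{x}^TQ\mathbf{x}-p}$ for $Q\in S^n(\mathbb{R})$. *)

theory Defs
  imports Complex_Main "HOL-Computational_Algebra.Polynomial" "Jordan_Normal_Form.Char_Poly"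
begin

definition poly_norm :: "real poly \<Rightarrow> real" where
  "poly_norm p = sqrt (\<Sum>i\<le>degree p. (coeff p i)\<^sup>2)"

(* x^T Q x for x = [1, x, ..., x^(n-1)], n = dim_row Q  (0-indexed entries) *)
definition quad_poly :: "'a::comm_ring_1 mat \<Rightarrow> 'a poly" where
  "quad_poly Q = (\<Sum>i<dim_row Q. \<Sum>j<dim_col Q. monom (Q $$ (i,j)) (i+j))"

definition hank_s :: "nat \<Rightarrow> nat \<Rightarrow> nat" where
  "hank_s n k = (if k \<le> n - 1 then k + 1 else 2*n - 1 - k)"

definition hankel_mat :: "nat \<Rightarrow> 'a::field_char_0 poly \<Rightarrow> 'a mat" where
  "hankel_mat n p = mat n n (\<lambda>(i,j). coeff p (i+j) / of_nat (hank_s n (i+j)))"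

definition proj_mat :: "nat \<Rightarrow> 'a::field_char_0 poly \<Rightarrow> 'a mat \<Rightarrow> 'a mat" where
  "proj_mat n p Q = Q - hankel_mat n (quad_poly Q - p)"

definition symmetric_mat :: "nat \<Rightarrow> 'a mat \<Rightarrow> bool" where
  "symmetric_mat n Q \<longleftrightarrow> Q \<in> carrier_mat n n \<and> transpose_mat Q = Q"

definition pos_def_mat :: "nat \<Rightarrow> real mat \<Rightarrow> bool" where
  "pos_def_mat n Q \<longleftrightarrow> symmetric_mat n Q \<and>
     (\<forall>v \<in> carrier_vec n. v \<noteq> 0\<^sub>v n \<longrightarrow> v \<bullet> (Q *\<^sub>v v) > 0)"

end

theory Submission imports Defs "HOL-Analysis.Function_Topology" "HOL-Analysis.L2_Norm" begin

lemma exists_min_sphere: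
  fixes F :: "(nat \<Rightarrow> real) \<Rightarrow> real"
  assumes n: "n > 0"
    and cont: "continuous_map (product_topology (\<lambda>_. euclideanreal) {..<n}) euclideanreal F"
  shows "\<exists>w\<in>PiE {..<n} (\<lambda>_. UNIV). (\<Sum>i<n. (w i)^2) = 1 \<and>
     (\<forall>u\<in>PiE {..<n} (\<lambda>_. UNIV). (\<Sum>i<n. (u i)^2) = 1 \<longrightarrow> F w \<le> F u)"
proof -
  let ?X = "product_topology (\<lambda>_. euclideanreal) {..<n}"
  define C where "C = {x \<in> topspace ?X. (\<lambda>x. \<Sum>i<n. (x i)^2) x \<in> {1}}"
  have cg: "continuous_map ?X euclideanreal (\<lambda>x. \<Sum>i<n. (x i)^2)"
    unfolding power2_eq_square by (intro continuous_map_sum continuous_map_real_mult continuous_map_product_projection) auto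
  have clo: "closedin ?X C" unfolding C_def
    by (rule closedin_continuous_map_preimage[OF cg]) auto
  have box: "compactin ?X (PiE {..<n} (\<lambda>_. {-1..1::real}))"
    by (subst compactin_PiE) (auto simp: compactin_euclidean_iff)
  have sub: "C \<subseteq> PiE {..<n} (\<lambda>_. {-1..1::real})"
  proof
    fix x assume x: "x \<in> C"
    hence xs: "(\<Sum>i<n. (x i)^2) = 1" and xe: "x \<in> PiE {..<n} (\<lambda>_. UNIV)" by (auto simp: C_def)
    { fix i assume i: "i < n"
      have "(x i)^2 \<le> (\<Sum>i<n. (x i)^2)"
        by (rule member_le_sum) (use i in auto)
      hence "(x i)^2 \<le> 1^2" using xs by simp
      hence "\<bar>x i\<bar> \<le> \<bar>1\<bar>" using abs_le_square_iff by blast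
      hence "x i \<in> {-1..1}" by auto }
    thus "x \<in> PiE {..<n} (\<lambda>_. {-1..1::real})" using xe by (auto simp: PiE_iff)
  qed
  have comp: "compactin ?X C" by (rule closed_compactin[OF box sub clo])
  have "compactin euclideanreal (F ` C)" by (rule image_compactin[OF comp cont])
  hence cF: "compact (F ` C)" by (simp add: compactin_euclidean_iff)
  define e where "e = (\<lambda>i\<in>{..<n}. if i = 0 then 1 else (0::real))"
  have "(\<Sum>i<n. (e i)^2) = (\<Sum>i<n. if i = 0 then 1 else 0)"
    by (rule sum.cong) (auto simp: e_def)
  also have "\<dots> = 1" using n by (simp add: sum.delta)
  finally have "e \<in> C" by (auto simp: C_def e_def)
  hence "F ` C \<noteq> {}" by auto
  from compact_attains_inf[OF cF this] obtain s where "s \<in> F ` C" "\<forall>t\<in>F ` C. s \<le> t" by blast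
  then obtain w where w: "w \<in> C" "\<forall>u\<in>C. F w \<le> F u" by auto
  thus ?thesis by (auto simp: C_def)
qed

lemma quad_form_sum:
  fixes A :: "'a::comm_ring_1 mat"
  assumes "A \<in> carrier_mat n n" "v \<in> carrier_vec n"
  shows "v \<bullet> (A *\<^sub>v v) = (\<Sum>i<n. v $ i * (\<Sum>j<n. A $$ (i,j) * v $ j))"
  using assms by (auto simp: scalar_prod_def mult_mat_vec_def lessThan_atLeast0 intro!: sum.cong)

definition qf :: "real mat \<Rightarrow> nat \<Rightarrow> (nat \<Rightarrow> real) \<Rightarrow> real" where
  "qf A n u = (\<Sum>i<n. u i * (\<Sum>j<n. A $$ (i,j) * u j))"

lemma qf_expand:
  "qf A n (\<lambda>i. w i + t * u i) = qf A n w + t * (\<Sum>i<n. w i * (\<Sum>j<n. A $$ (i,j) * u j))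
     + t * (\<Sum>i<n. u i * (\<Sum>j<n. A $$ (i,j) * w j)) + t^2 * qf A n u"
  unfolding qf_def power2_eq_square
  by (simp add: algebra_simps sum.distrib sum_distrib_left)

lemma qf_sym:
  fixes A :: "real mat"
  assumes "\<And>i j. i < n \<Longrightarrow> j < n \<Longrightarrow> A $$ (i,j) = A $$ (j,i)"
  shows "(\<Sum>i<n. w i * (\<Sum>j<n. A $$ (i,j) * u j)) = (\<Sum>i<n. u i * (\<Sum>j<n. A $$ (i,j) * w j))"
proof -
  have "(\<Sum>i<n. w i * (\<Sum>j<n. A $$ (i,j) * u j)) = (\<Sum>i<n. \<Sum>j<n. w i * A $$ (i,j) * u j)"
    unfolding sum_distrib_left by (simp add: mult.assoc)
  also have "\<dots> = (\<Sum>j<n. \<Sum>i<n. w i * A $$ (i,j) * u j)" by (rule sum.swap)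
  also have "\<dots> = (\<Sum>j<n. \<Sum>i<n. u j * (A $$ (j,i) * w i))"
    using assms by (intro sum.cong refl) (simp add: algebra_simps)
  also have "\<dots> = (\<Sum>i<n. u i * (\<Sum>j<n. A $$ (i,j) * w j))"
    by (simp add: sum_distrib_left)
  finally show ?thesis .
qed

lemma qf_scale: "qf A n (\<lambda>i. c * u i) = c^2 * qf A n u"
  unfolding qf_def power2_eq_square by (simp add: sum_distrib_left algebra_simps)

lemma quad_nonneg_aux:
  fixes b c :: real
  assumes "\<forall>t. 0 \<le> 2 * t * b + t^2 * c" "0 \<le> c"
  shows "b = 0"
proof (rule ccontr)
  assume b: "b \<noteq> 0"
  define t where "t = - b / (c + 1)"
  have c1: "c + 1 > 0" using assms by simp
  have "0 \<le> 2 * t * b + t^2 * c" using assms by blast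
  hence "0 \<le> (2 * t * b + t^2 * c) * (c+1)^2" using c1 by simp
  also have "(2 * t * b + t^2 * c) * (c+1)^2 = 2*b*(t*(c+1))*(c+1) + (t*(c+1))^2*c"
    by (simp add: power2_eq_square algebra_simps)
  also have "t*(c+1) = -b" using c1 unfolding t_def by simp
  also have "2*b*(-b)*(c+1) + (-b)^2*c = b^2 * (- c - 2)"
    by (simp add: power2_eq_square algebra_simps)
  also have "\<dots> < 0" using b assms(2) by (simp add: mult_pos_neg)
  finally show False by simp
qed

lemma min_eig_quad:
  fixes A :: "real mat"
  assumes A: "A \<in> carrier_mat n n" and sym: "\<And>i j. i<n \<Longrightarrow> j<n \<Longrightarrow> A$$(i,j) = A$$(j,i)"
    and ev: "\<forall>k. eigenvalue A k \<longrightarrow> \<sigma> \<le> k"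
  shows "\<sigma> * (\<Sum>i<n. (u i)^2) \<le> qf A n u"
proof (cases "n = 0")
  case True thus ?thesis by (simp add: qf_def)
next
  case False
  hence n: "n > 0" by simp
  have cont: "continuous_map (product_topology (\<lambda>_. euclideanreal) {..<n}) euclideanreal (qf A n)"
    unfolding qf_def
    by (intro continuous_map_sum continuous_map_real_mult continuous_map_product_projection; simp)
  obtain w where w: "w \<in> PiE {..<n} (\<lambda>_. UNIV)" "(\<Sum>i<n. (w i)^2) = 1"
     "\<forall>u\<in>PiE {..<n} (\<lambda>_. UNIV). (\<Sum>i<n. (u i)^2) = 1 \<longrightarrow> qf A n w \<le> qf A n u"
    using exists_min_sphere[OF n cont] by blast
  define m where "m = qf A n w"
  have lb: "m * (\<Sum>i<n. (u i)^2) \<le> qf A n u" for u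
  proof (cases "(\<Sum>i<n. (u i)^2) = 0")
    case True
    hence "\<forall>i\<in>{..<n}. (u i)^2 = 0" by (subst sum_nonneg_eq_0_iff[symmetric]) auto
    hence "qf A n u = 0" by (simp add: qf_def)
    thus ?thesis using True by simp
  next
    case False
    define s where "s = (\<Sum>i<n. (u i)^2)"
    have s0: "s > 0" using False unfolding s_def by (metis less_eq_real_def sum_nonneg zero_le_power2)
    define c where "c = sqrt s"
    have c0: "c > 0" using s0 unfolding c_def by simp
    have cc: "c^2 = s" using s0 unfolding c_def by simp
    define u' where "u' = restrict (\<lambda>i. (1/c) * u i) {..<n}"
    have "(\<Sum>i<n. (u' i)^2) = (\<Sum>i<n. (1/c)^2 * (u i)^2)"
      unfolding u'_def by (intro sum.cong refl) (simp add: power_divide)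
    also have "\<dots> = (1/c)^2 * s" unfolding s_def by (simp add: sum_distrib_left)
    also have "\<dots> = 1" using cc c0 s0 by (simp add: field_simps)
    finally have "qf A n w \<le> qf A n u'" using w(3) unfolding u'_def by auto
    also have "qf A n u' = qf A n (\<lambda>i. (1/c) * u i)" unfolding u'_def qf_def by simp
    also have "\<dots> = (1/c)^2 * qf A n u" by (rule qf_scale)
    finally have "m \<le> qf A n u / s" unfolding m_def using cc by (simp add: field_simps)
    thus ?thesis using s0 unfolding s_def[symmetric] by (simp add: field_simps)
  qed
  define B where "B u = (\<Sum>i<n. u i * (\<Sum>j<n. A $$ (i,j) * w j)) - m * (\<Sum>i<n. w i * u i)" for u
  have B0: "B u = 0" for u
  proof (rule quad_nonneg_aux)
    show "0 \<le> qf A n u - m * (\<Sum>i<n. (u i)^2)" using lb[of u] by simp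
    show "\<forall>t. 0 \<le> 2 * t * B u + t^2 * (qf A n u - m * (\<Sum>i<n. (u i)^2))"
    proof
      fix t :: real
      have "m * (\<Sum>i<n. (w i + t * u i)^2) \<le> qf A n (\<lambda>i. w i + t * u i)" by (rule lb)
      also have "\<dots> = m + 2 * t * (\<Sum>i<n. u i * (\<Sum>j<n. A $$ (i,j) * w j)) + t^2 * qf A n u"
        using qf_sym[OF sym, where w=w and u=u] unfolding qf_expand m_def by simp
      also have "(\<Sum>i<n. (w i + t * u i)^2) = (\<Sum>i<n. (w i)^2) + 2 * t * (\<Sum>i<n. w i * u i) + t^2 * (\<Sum>i<n. (u i)^2)"
        by (simp add: power2_eq_square algebra_simps sum.distrib sum_distrib_left)
      finally show "0 \<le> 2 * t * B u + t^2 * (qf A n u - m * (\<Sum>i<n. (u i)^2))"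
        unfolding B_def using w(2) by (simp add: algebra_simps)
    qed
  qed
  define z where "z i = (\<Sum>j<n. A $$ (i,j) * w j) - m * w i" for i
  have "B z = (\<Sum>i<n. (z i)^2)"
    unfolding B_def by (simp add: z_def power2_eq_square algebra_simps sum_subtractf sum_distrib_left sum.distrib)
  hence "(\<Sum>i<n. (z i)^2) = 0" using B0 by simp
  hence z0: "\<forall>i\<in>{..<n}. (z i)^2 = 0" by (subst sum_nonneg_eq_0_iff[symmetric]) auto
  have "eigenvector A (vec n w) m" unfolding eigenvector_def
  proof (intro conjI)
    show "vec n w \<in> carrier_vec (dim_row A)" using A by simp
    show "vec n w \<noteq> 0\<^sub>v (dim_row A)"
    proof
      assume "vec n w = 0\<^sub>v (dim_row A)"
      hence "\<forall>i<n. w i = 0" using A by (metis carrier_matD(1) index_vec index_zero_vec(1))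
      hence "(\<Sum>i<n. (w i)^2) = 0" by simp
      thus False using w(2) by simp
    qed
    show "A *\<^sub>v vec n w = m \<cdot>\<^sub>v vec n w"
    proof (rule eq_vecI)
      fix i assume "i < dim_vec (m \<cdot>\<^sub>v vec n w)"
      hence i: "i < n" by simp
      have "(A *\<^sub>v vec n w) $ i = (\<Sum>j<n. A $$ (i,j) * w j)"
        using A i by (simp add: mult_mat_vec_def scalar_prod_def lessThan_atLeast0 mult.commute)
      also have "\<dots> = m * w i" using z0 i unfolding z_def by simp
      finally show "(A *\<^sub>v vec n w) $ i = (m \<cdot>\<^sub>v vec n w) $ i" using i by simp
    qed (use A in simp)
  qed
  hence "\<sigma> \<le> m" using ev unfolding eigenvalue_def by blast
  hence "\<sigma> * (\<Sum>i<n. (u i)^2) \<le> m * (\<Sum>i<n. (u i)^2)"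
    by (intro mult_right_mono) (auto intro: sum_nonneg)
  also have "\<dots> \<le> qf A n u" by (rule lb)
  finally show ?thesis .
qed


definition AD :: "nat \<Rightarrow> nat \<Rightarrow> nat set" where
  "AD n k = {i. i < n \<and> i \<le> k \<and> k - i < n}"

lemma AD_eq: "AD n k = {k + 1 - n ..< min n (k+1)}"
  unfolding AD_def by auto

lemma finite_AD[simp]: "finite (AD n k)" by (simp add: AD_eq)

lemma card_AD: "k < 2*n - 1 \<Longrightarrow> card (AD n k) = hank_s n k"
  unfolding AD_eq hank_s_def by auto

lemma AD_empty: "2*n - 1 \<le> k \<Longrightarrow> AD n k = {}"
  unfolding AD_eq by auto

lemma hank_s_pos: "k < 2*n - 1 \<Longrightarrow> hank_s n k > 0"
  unfolding hank_s_def by auto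

lemma sum_antidiag:
  fixes h :: "nat \<Rightarrow> nat \<Rightarrow> 'a::comm_monoid_add"
  shows "(\<Sum>i<n. \<Sum>j<n. h i j) = (\<Sum>k<2*n-1. \<Sum>i\<in>AD n k. h i (k-i))"
proof -
  have "(\<Sum>i<n. \<Sum>j<n. h i j) = (\<Sum>x\<in>{..<n}\<times>{..<n}. h (fst x) (snd x))"
    by (simp add: sum.cartesian_product case_prod_beta)
  also have "\<dots> = (\<Sum>k<2*n-1. \<Sum>x\<in>{x\<in>{..<n}\<times>{..<n}. fst x + snd x = k}. h (fst x) (snd x))"
    by (rule sum.group[symmetric]) auto
  also have "\<dots> = (\<Sum>k<2*n-1. \<Sum>i\<in>AD n k. h i (k-i))"
  proof (rule sum.cong[OF refl])
    fix k
    have "{x\<in>{..<n}\<times>{..<n}. fst x + snd x = k} = (\<lambda>i. (i, k-i)) ` AD n k"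
      unfolding AD_def by force
    moreover have "inj_on (\<lambda>i. (i, k-i)) (AD n k)" by (auto intro: inj_onI)
    ultimately show "(\<Sum>x\<in>{x\<in>{..<n}\<times>{..<n}. fst x + snd x = k}. h (fst x) (snd x)) = (\<Sum>i\<in>AD n k. h i (k-i))"
      by (simp add: sum.reindex)
  qed
  finally show ?thesis .
qed

lemma sum_antidiag_if:
  fixes \<phi> :: "nat \<Rightarrow> nat \<Rightarrow> 'a::comm_monoid_add"
  shows "(\<Sum>i<n. \<Sum>j<n. if i + j = k then \<phi> i j else 0) = (\<Sum>i\<in>AD n k. \<phi> i (k-i))"
proof -
  have "(\<Sum>i<n. \<Sum>j<n. if i + j = k then \<phi> i j else 0) = (\<Sum>i<n. if i \<in> AD n k then \<phi> i (k-i) else 0)"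
  proof (rule sum.cong[OF refl])
    fix i assume i: "i \<in> {..<n}"
    show "(\<Sum>j<n. if i + j = k then \<phi> i j else 0) = (if i \<in> AD n k then \<phi> i (k-i) else 0)"
    proof (cases "i \<le> k")
      case True
      hence "(\<Sum>j<n. if i + j = k then \<phi> i j else 0) = (\<Sum>j<n. if j = k - i then \<phi> i (k-i) else 0)"
        by (intro sum.cong refl) auto
      also have "\<dots> = (if k - i < n then \<phi> i (k-i) else 0)" by (simp add: sum.delta')
      finally show ?thesis using True i unfolding AD_def by auto
    next
      case False
      thus ?thesis unfolding AD_def by (auto intro!: sum.neutral)
    qed
  qed
  also have "\<dots> = (\<Sum>i\<in>AD n k. \<phi> i (k-i))"
    by (subst sum.If_cases) (auto simp: AD_def intro!: sum.cong)
  finally show ?thesis .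
qed

lemma coeff_quad_poly:
  assumes "M \<in> carrier_mat n n"
  shows "coeff (quad_poly M) k = (\<Sum>i\<in>AD n k. M $$ (i, k-i))"
proof -
  have "coeff (quad_poly M) k = (\<Sum>i<n. \<Sum>j<n. if i + j = k then M $$ (i,j) else 0)"
    using assms unfolding quad_poly_def by (simp add: coeff_sum coeff_monom eq_commute)
  also have "\<dots> = (\<Sum>i\<in>AD n k. M $$ (i, k-i))" by (rule sum_antidiag_if)
  finally show ?thesis .
qed


lemma poly_norm_L2: "poly_norm p = L2_set (coeff p) {..degree p}"
  unfolding poly_norm_def L2_set_def by simp

lemma poly_norm_ge: "degree p \<le> N \<Longrightarrow> L2_set (coeff p) {..N} = poly_norm p"
  unfolding poly_norm_L2 L2_set_def
  by (rule arg_cong[where f=sqrt], rule sum.mono_neutral_right) (auto simp: coeff_eq_0)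

lemma L2_set_mono_set: "finite B \<Longrightarrow> A \<subseteq> B \<Longrightarrow> L2_set f A \<le> L2_set f B"
  unfolding L2_set_def by (intro real_sqrt_le_mono sum_mono2) auto

lemma poly_norm_lessThan: "L2_set (coeff p) {..<N} \<le> poly_norm p"
proof -
  have "L2_set (coeff p) {..<N} \<le> L2_set (coeff p) {..max N (degree p)}"
    by (rule L2_set_mono_set) auto
  also have "\<dots> = poly_norm p" by (rule poly_norm_ge) simp
  finally show ?thesis .
qed

lemma poly_norm_add: "poly_norm (p + q) \<le> poly_norm p + poly_norm q"
proof -
  define N where "N = max (degree p) (degree q)"
  have "poly_norm (p + q) = L2_set (coeff (p+q)) {..N}"
    by (rule poly_norm_ge[symmetric]) (simp add: N_def degree_add_le)
  also have "\<dots> = L2_set (\<lambda>i. coeff p i + coeff q i) {..N}" by (rule L2_set_cong) auto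
  also have "\<dots> \<le> L2_set (coeff p) {..N} + L2_set (coeff q) {..N}" by (rule L2_set_triangle_ineq)
  also have "\<dots> = poly_norm p + poly_norm q"
    by (simp add: poly_norm_ge N_def)
  finally show ?thesis .
qed

lemma poly_norm_0[simp]: "poly_norm 0 = 0" by (simp add: poly_norm_def)

lemma poly_norm_sum: "finite A \<Longrightarrow> poly_norm (\<Sum>i\<in>A. p i) \<le> (\<Sum>i\<in>A. poly_norm (p i))"
proof (induction A rule: finite_induct)
  case (insert x F)
  thus ?case using poly_norm_add[of "p x" "sum p F"] by simp
qed simp

lemma poly_norm_monom_mult: "poly_norm (monom c i * p) \<le> \<bar>c\<bar> * poly_norm p"
proof -
  define d where "d = degree p"
  have "poly_norm (monom c i * p) = L2_set (coeff (monom c i * p)) {..i+d}"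
    by (rule poly_norm_ge[symmetric]) (simp add: d_def degree_mult_le[THEN order_trans] degree_monom_le
       order_trans[OF degree_mult_le] add_mono)
  also have "\<dots> = sqrt (\<Sum>k\<le>i+d. (if i \<le> k then c * coeff p (k - i) else 0)^2)"
    unfolding L2_set_def coeff_monom_mult by simp
  also have "(\<Sum>k\<le>i+d. (if i \<le> k then c * coeff p (k - i) else 0)^2) = (\<Sum>k\<in>{i..i+d}. (c * coeff p (k - i))^2)"
    by (rule sum.mono_neutral_cong_right) auto
  also have "\<dots> = (\<Sum>k\<in>{0+i..d+i}. (c * coeff p (k - i))^2)" by (simp add: add.commute)
  also have "\<dots> = (\<Sum>j\<in>{0..d}. (c * coeff p j)^2)" by (subst sum.shift_bounds_cl_nat_ivl) simp
  also have "\<dots> = c^2 * (\<Sum>j\<le>d. (coeff p j)^2)"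
    by (simp add: sum_distrib_left power_mult_distrib atLeast0AtMost)
  also have "sqrt \<dots> = \<bar>c\<bar> * poly_norm p" unfolding poly_norm_def d_def by (simp add: real_sqrt_mult)
  finally show ?thesis by simp
qed


lemma var_le:
  fixes x :: "nat \<Rightarrow> real"
  assumes "finite S"
  shows "(\<Sum>i\<in>S. (x i - (\<Sum>j\<in>S. x j) / card S)^2) \<le> (\<Sum>i\<in>S. (x i)^2)"
proof (cases "S = {}")
  case True thus ?thesis by simp
next
  case False
  define s where "s = (\<Sum>j\<in>S. x j)"
  define c where "c = real (card S)"
  have c0: "c > 0" using False assms unfolding c_def by (simp add: card_gt_0_iff)
  have "(\<Sum>i\<in>S. (x i - s / c)^2) = (\<Sum>i\<in>S. (x i)^2 - 2 * (s/c) * x i + (s/c)^2)"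
    by (intro sum.cong refl) (simp add: power2_eq_square algebra_simps)
  also have "\<dots> = (\<Sum>i\<in>S. (x i)^2) - 2 * (s/c) * s + c * (s/c)^2"
    by (simp add: sum.distrib sum_subtractf sum_distrib_left[symmetric] s_def c_def sum_divide_distrib[symmetric])
  also have "\<dots> = (\<Sum>i\<in>S. (x i)^2) - s^2 / c"
    using c0 by (simp add: power2_eq_square field_simps)
  also have "\<dots> \<le> (\<Sum>i\<in>S. (x i)^2)" using c0 by simp
  finally show ?thesis unfolding s_def c_def .
qed

lemma perturb_bound:
  fixes D :: "nat \<Rightarrow> nat \<Rightarrow> real" and u :: "nat \<Rightarrow> real"
  shows "\<bar>\<Sum>i<n. u i * (\<Sum>j<n. D i j * u j)\<bar> \<le>
     L2_set (\<lambda>x. D (fst x) (snd x)) ({..<n}\<times>{..<n}) * (\<Sum>i<n. (u i)^2)"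
proof -
  let ?P = "{..<n}\<times>{..<n}"
  have "(\<Sum>i<n. u i * (\<Sum>j<n. D i j * u j)) = (\<Sum>x\<in>?P. D (fst x) (snd x) * (u (fst x) * u (snd x)))"
    by (simp add: sum_distrib_left sum.cartesian_product case_prod_beta algebra_simps)
  hence "\<bar>\<Sum>i<n. u i * (\<Sum>j<n. D i j * u j)\<bar> \<le> (\<Sum>x\<in>?P. \<bar>D (fst x) (snd x)\<bar> * \<bar>u (fst x) * u (snd x)\<bar>)"
    by (simp add: sum_abs[THEN order_trans] abs_mult)
  also have "\<dots> \<le> L2_set (\<lambda>x. D (fst x) (snd x)) ?P * L2_set (\<lambda>x. u (fst x) * u (snd x)) ?P"
    by (rule L2_set_mult_ineq)
  also have "L2_set (\<lambda>x. u (fst x) * u (snd x)) ?P = (\<Sum>i<n. (u i)^2)"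
  proof -
    have "(\<Sum>x\<in>?P. (u (fst x) * u (snd x))^2) = (\<Sum>i<n. (u i)^2)^2"
      by (simp add: power2_eq_square sum_product sum.cartesian_product case_prod_beta algebra_simps)
    thus ?thesis unfolding L2_set_def by (simp add: sum_nonneg)
  qed
  finally show ?thesis .
qed


theorem mainTheorem10:
  fixes f g :: "rat poly" and n :: nat
    and Qs :: "real mat" and \<sigma> :: real and qs :: "real poly" and \<delta> :: real
  assumes hf: "degree f = n"
    and hg: "\<forall>i. 2 * n < i + 2 \<longrightarrow> coeff g i = 0"
    and hQs: "pos_def_mat n Qs"
    and h\<sigma>: "eigenvalue Qs \<sigma>" "\<forall>k. eigenvalue Qs k \<longrightarrow> \<sigma> \<le> k" "\<sigma> > 0"
    and hqs: "\<forall>i. n < i + 2 \<longrightarrow> coeff qs i = 0"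
    and h\<rho>: "poly_norm (quad_poly Qs + qs * map_poly of_rat f - map_poly of_rat g) < \<sigma>"
    and h\<delta>0: "0 < \<delta>"
    and h\<delta>: "\<delta> < (\<sigma> - poly_norm (quad_poly Qs + qs * map_poly of_rat f - map_poly of_rat g))
                / (real n + (real n - 1) * sqrt (real n) * poly_norm (map_poly of_rat f))"
  shows "\<forall>Qb :: rat mat. \<forall>q :: rat poly.
           symmetric_mat n Qb \<longrightarrow>
           (\<forall>i. n < i + 2 \<longrightarrow> coeff q i = 0) \<longrightarrow>
           (\<forall>i<n. \<forall>j<n. \<bar>of_rat (Qb $$ (i,j)) - Qs $$ (i,j)\<bar> \<le> \<delta>) \<longrightarrow>
           (\<forall>i. i + 2 \<le> n \<longrightarrow> \<bar>of_rat (coeff q i) - coeff qs i\<bar> \<le> \<delta>) \<longrightarrow>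
           (let Q = proj_mat n (g - q * f) Qb in
              symmetric_mat n Q \<and> g = quad_poly Q + q * f
              \<and> pos_def_mat n (map_mat of_rat Q))"
proof (intro allI impI)
  fix Qb :: "rat mat" and q :: "rat poly"
  assume sQb: "symmetric_mat n Qb" and hq: "\<forall>i. n < i + 2 \<longrightarrow> coeff q i = 0"
    and hE: "\<forall>i<n. \<forall>j<n. \<bar>of_rat (Qb $$ (i,j)) - Qs $$ (i,j)\<bar> \<le> \<delta>"
    and hqd: "\<forall>i. i + 2 \<le> n \<longrightarrow> \<bar>of_rat (coeff q i) - coeff qs i\<bar> \<le> \<delta>"
  define p where "p = g - q * f"
  define c where "c = quad_poly Qb - p"
  define Q where "Q = proj_mat n p Qb"
  have Qb: "Qb \<in> carrier_mat n n" using sQb unfolding symmetric_mat_def by simp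
  have Qbsym: "Qb $$ (i,j) = Qb $$ (j,i)" if "i < n" "j < n" for i j
  proof -
    have "Qb $$ (i,j) = transpose_mat Qb $$ (i,j)" using sQb unfolding symmetric_mat_def by simp
    also have "\<dots> = Qb $$ (j,i)" using Qb that by simp
    finally show ?thesis .
  qed
  have Qidx: "Q $$ (i,j) = Qb $$ (i,j) - coeff c (i+j) / of_nat (hank_s n (i+j))"
    if "i < n" "j < n" for i j
    unfolding Q_def proj_mat_def hankel_mat_def c_def using Qb that by simp
  have QC: "Q \<in> carrier_mat n n" unfolding Q_def proj_mat_def hankel_mat_def using Qb by (auto intro!: minus_carrier_mat)
  have symQ: "symmetric_mat n Q" unfolding symmetric_mat_def
  proof
    show "transpose_mat Q = Q"
    proof (rule eq_matI)
      fix i j assume "i < dim_row Q" "j < dim_col Q"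
      hence ij: "i < n" "j < n" using QC by auto
      show "transpose_mat Q $$ (i, j) = Q $$ (i, j)"
        using ij QC by (simp add: Qidx Qbsym add.commute)
    qed (use QC in auto)
  qed (rule QC)
  have qf_zero: "coeff (q*f) k = 0" if "2*n - 1 \<le> k" for k
  proof -
    have "coeff (q*f) k = (\<Sum>i\<le>k. coeff q i * coeff f (k-i))" by (rule coeff_mult)
    also have "\<dots> = 0"
    proof (rule sum.neutral, rule ballI)
      fix i assume "i \<in> {..k}"
      show "coeff q i * coeff f (k-i) = 0"
      proof (cases "n < i + 2")
        case True thus ?thesis using hq by simp
        next
        case False
        hence "degree f < k - i" using that hf by linarith
        thus ?thesis by (simp add: coeff_eq_0)
      qed
    qed
    finally show ?thesis .
  qed
  have g_zero: "coeff g k = 0" if "2*n - 1 \<le> k" for k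
  proof -
    have "2*n < k+2" using that by arith
    thus ?thesis using hg by simp
  qed
  have quadQ: "g = quad_poly Q + q * f"
  proof (rule poly_eqI)
    fix k
    have "coeff (quad_poly Q) k = (\<Sum>i\<in>AD n k. Q $$ (i, k-i))" by (rule coeff_quad_poly[OF QC])
    also have "\<dots> = (\<Sum>i\<in>AD n k. Qb $$ (i, k-i) - coeff c k / of_nat (hank_s n k))"
      by (intro sum.cong refl) (auto simp: AD_def Qidx)
    also have "\<dots> = coeff (quad_poly Qb) k - of_nat (card (AD n k)) * (coeff c k / of_nat (hank_s n k))"
      by (simp add: sum_subtractf coeff_quad_poly[OF Qb])
    also have "\<dots> = coeff g k - coeff (q * f) k"
    proof (cases "k < 2*n - 1")
      case True
      have "of_nat (hank_s n k) \<noteq> (0::rat)" using hank_s_pos[OF True] by simp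
      thus ?thesis using True by (simp add: card_AD c_def p_def)
    next
      case False
      thus ?thesis using qf_zero g_zero AD_empty[of n k] by (simp add: coeff_quad_poly[OF Qb])
    qed
    finally show "coeff g k = coeff (quad_poly Q + q * f) k" by simp
  qed
  have posdef: "pos_def_mat n (map_mat of_rat Q)"
  proof -
    have QsC: "Qs \<in> carrier_mat n n" and Qst: "transpose_mat Qs = Qs"
      using hQs unfolding pos_def_mat_def symmetric_mat_def by auto
    have Qssym: "Qs $$ (i,j) = Qs $$ (j,i)" if "i < n" "j < n" for i j
    proof -
      have "Qs $$ (i,j) = transpose_mat Qs $$ (i,j)" using Qst by simp
      also have "\<dots> = Qs $$ (j,i)" using QsC that by simp
      finally show ?thesis .
    qed
    have npos: "n > 0"
    proof (rule ccontr)
      assume "\<not> n > 0"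
      hence n0: "n = 0" by simp
      obtain v where "eigenvector Qs v \<sigma>" using h\<sigma>(1) unfolding eigenvalue_def by blast
      hence "v \<in> carrier_vec 0" "v \<noteq> 0\<^sub>v 0" using QsC n0 unfolding eigenvector_def by auto
      thus False by (metis carrier_vecD eq_vecI index_zero_vec(2) less_nat_zero_code)
    qed
    define fR where "fR = map_poly (of_rat :: rat \<Rightarrow> real) f"
    define gR where "gR = map_poly (of_rat :: rat \<Rightarrow> real) g"
    define qR where "qR = map_poly (of_rat :: rat \<Rightarrow> real) q"
    define rpoly where "rpoly = quad_poly Qs + qs * fR - gR"
    define dpoly where "dpoly = (qR - qs) * fR"
    define ppoly where "ppoly = rpoly + dpoly"
    define E where "E i j = (of_rat (Qb $$ (i,j)) :: real) - Qs $$ (i,j)" for i j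
    define e where "e k = (\<Sum>i\<in>AD n k. E i (k-i))" for k
    define s where "s k = real (hank_s n k)" for k
    define M where "M = map_mat (of_rat :: rat \<Rightarrow> real) Q"
    define D where "D i j = M $$ (i,j) - Qs $$ (i,j)" for i j
    define X where "X i j = E i j - e (i+j) / s (i+j)" for i j
    define Y where "Y i j = coeff ppoly (i+j) / s (i+j)" for i j
    let ?P = "{..<n} \<times> {..<n}"
    have MC: "M \<in> carrier_mat n n" using QC unfolding M_def by simp
    have ofrat_mult: "of_rat (coeff (q*f) k) = coeff (qR * fR) k" for k
      unfolding coeff_mult qR_def fR_def by (simp add: of_rat_sum of_rat_mult)
    have key: "of_rat (coeff c k) = e k + coeff ppoly k" for k
    proof -
      have "of_rat (coeff c k) = (\<Sum>i\<in>AD n k. of_rat (Qb $$ (i,k-i))) - coeff gR k + coeff (qR*fR) k"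
        unfolding c_def p_def by (simp add: coeff_quad_poly[OF Qb] of_rat_sum of_rat_diff of_rat_add ofrat_mult[symmetric] gR_def)
      moreover have "e k = (\<Sum>i\<in>AD n k. of_rat (Qb $$ (i,k-i))) - (\<Sum>i\<in>AD n k. Qs $$ (i,k-i))"
        unfolding e_def E_def by (simp add: sum_subtractf)
      moreover have "coeff ppoly k = (\<Sum>i\<in>AD n k. Qs $$ (i,k-i)) - coeff gR k + coeff (qR*fR) k"
        unfolding ppoly_def rpoly_def dpoly_def by (simp add: coeff_quad_poly[OF QsC] left_diff_distrib)
      ultimately show ?thesis by simp
    qed
    have Dsplit: "D i j = X i j - Y i j" if "i < n" "j < n" for i j
      unfolding D_def X_def Y_def M_def using that QC
      by (simp add: Qidx of_rat_diff of_rat_divide key E_def s_def add_divide_distrib)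
    have sumsq_antidiag: "(\<Sum>i<n. \<Sum>j<n. (Z i j)^2) = (\<Sum>x\<in>?P. (Z (fst x) (snd x))^2)" for Z :: "nat \<Rightarrow> nat \<Rightarrow> real"
      by (simp add: sum.cartesian_product case_prod_beta)
    have Lx: "L2_set (\<lambda>x. X (fst x) (snd x)) ?P \<le> real n * \<delta>"
    proof -
      have "(\<Sum>i<n. \<Sum>j<n. (X i j)^2) = (\<Sum>k<2*n-1. \<Sum>i\<in>AD n k. (X i (k-i))^2)"
        by (rule sum_antidiag)
      also have "\<dots> = (\<Sum>k<2*n-1. \<Sum>i\<in>AD n k. (E i (k-i) - (\<Sum>i\<in>AD n k. E i (k-i)) / card (AD n k))^2)"
      proof (intro sum.cong refl)
        fix k i assume k: "k \<in> {..<2*n-1}" and i: "i \<in> AD n k"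
        have "i + (k - i) = k" using i by (simp add: AD_def)
        thus "(X i (k-i))^2 = (E i (k-i) - (\<Sum>i\<in>AD n k. E i (k-i)) / card (AD n k))^2"
          using k by (simp add: X_def e_def s_def card_AD)
      qed
      also have "\<dots> \<le> (\<Sum>k<2*n-1. \<Sum>i\<in>AD n k. (E i (k-i))^2)"
        by (intro sum_mono var_le) simp
      also have "\<dots> = (\<Sum>i<n. \<Sum>j<n. (E i j)^2)" by (rule sum_antidiag[symmetric])
      also have "\<dots> \<le> (\<Sum>i<n. \<Sum>j<n. \<delta>^2)"
      proof (intro sum_mono)
        fix i j assume "i \<in> {..<n}" "j \<in> {..<n}"
        hence "\<bar>E i j\<bar> \<le> \<delta>" using hE unfolding E_def by simp
        thus "(E i j)^2 \<le> \<delta>^2" by (metis abs_le_square_iff abs_of_pos h\<delta>0)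
      qed
      also have "\<dots> = (real n * \<delta>)^2" by (simp add: power2_eq_square)
      finally have "L2_set (\<lambda>x. X (fst x) (snd x)) ?P \<le> sqrt ((real n * \<delta>)^2)"
        unfolding L2_set_def sumsq_antidiag by (rule real_sqrt_le_mono)
      thus ?thesis using h\<delta>0 by simp
    qed
    have Ly: "L2_set (\<lambda>x. Y (fst x) (snd x)) ?P \<le> poly_norm ppoly"
    proof -
      have "(\<Sum>i<n. \<Sum>j<n. (Y i j)^2) = (\<Sum>k<2*n-1. \<Sum>i\<in>AD n k. (Y i (k-i))^2)"
        by (rule sum_antidiag)
      also have "\<dots> = (\<Sum>k<2*n-1. s k * (coeff ppoly k / s k)^2)"
      proof (rule sum.cong[OF refl])
        fix k assume k: "k \<in> {..<2*n-1}"
        have "(\<Sum>i\<in>AD n k. (Y i (k-i))^2) = (\<Sum>i\<in>AD n k. (coeff ppoly k / s k)^2)"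
          by (intro sum.cong refl) (simp add: Y_def AD_def)
        also have "\<dots> = s k * (coeff ppoly k / s k)^2" using k by (simp add: s_def card_AD)
        finally show "(\<Sum>i\<in>AD n k. (Y i (k-i))^2) = s k * (coeff ppoly k / s k)^2" .
      qed
      also have "\<dots> \<le> (\<Sum>k<2*n-1. (coeff ppoly k)^2)"
      proof (intro sum_mono)
        fix k assume "k \<in> {..<2*n-1}"
        hence s1: "s k \<ge> 1" using hank_s_pos[of k n] unfolding s_def by simp
        have "s k * (coeff ppoly k / s k)^2 = (coeff ppoly k)^2 / s k"
          using s1 by (simp add: power2_eq_square field_simps)
        also have "\<dots> \<le> (coeff ppoly k)^2" using s1 mult_right_mono[OF s1, of "(coeff ppoly k)^2"] by (simp add: pos_divide_le_eq mult.commute)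
        finally show "s k * (coeff ppoly k / s k)^2 \<le> (coeff ppoly k)^2" .
      qed
      finally have "L2_set (\<lambda>x. Y (fst x) (snd x)) ?P \<le> L2_set (coeff ppoly) {..<2*n-1}"
        unfolding L2_set_def sumsq_antidiag by (rule real_sqrt_le_mono)
      also have "\<dots> \<le> poly_norm ppoly" by (rule poly_norm_lessThan)
      finally show ?thesis .
    qed
    have Ld: "poly_norm dpoly \<le> (real n - 1) * \<delta> * poly_norm fR"
    proof -
      define dq where "dq = qR - qs"
      have dq0: "coeff dq k = 0" if "n - 1 \<le> k" for k
      proof -
        have "n < k + 2" using that npos by arith
        thus ?thesis using hq hqs unfolding dq_def qR_def by simp
      qed
      have dqsum: "dq = (\<Sum>i<n-1. monom (coeff dq i) i)"
      proof (rule poly_eqI)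
        fix k
        show "coeff dq k = coeff (\<Sum>i<n-1. monom (coeff dq i) i) k"
          using dq0[of k] by (auto simp: coeff_sum coeff_monom)
      qed
      have "dpoly = (\<Sum>i<n-1. monom (coeff dq i) i * fR)"
        unfolding dpoly_def dq_def[symmetric] by (subst dqsum) (simp add: sum_distrib_right)
      hence "poly_norm dpoly \<le> (\<Sum>i<n-1. poly_norm (monom (coeff dq i) i * fR))"
        using poly_norm_sum[of "{..<n-1}" "\<lambda>i. monom (coeff dq i) i * fR"] by simp
      also have "\<dots> \<le> (\<Sum>i<n-1. \<delta> * poly_norm fR)"
      proof (intro sum_mono)
        fix i assume "i \<in> {..<n-1}"
        hence "i + 2 \<le> n" by auto
        hence "\<bar>coeff dq i\<bar> \<le> \<delta>" using hqd unfolding dq_def qR_def by simp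
        hence "\<bar>coeff dq i\<bar> * poly_norm fR \<le> \<delta> * poly_norm fR"
          by (intro mult_right_mono) (auto simp: poly_norm_L2)
        thus "poly_norm (monom (coeff dq i) i * fR) \<le> \<delta> * poly_norm fR"
          using poly_norm_monom_mult[of "coeff dq i" i fR] by linarith
      qed
      also have "\<dots> = (real n - 1) * \<delta> * poly_norm fR" using npos by (simp add: of_nat_diff)
      finally show ?thesis .
    qed
    have LD: "L2_set (\<lambda>x. D (fst x) (snd x)) ?P < \<sigma>"
    proof -
      have "L2_set (\<lambda>x. D (fst x) (snd x)) ?P = L2_set (\<lambda>x. X (fst x) (snd x) + (- Y (fst x) (snd x))) ?P"
        by (rule L2_set_cong) (auto simp: Dsplit)
      also have "\<dots> \<le> L2_set (\<lambda>x. X (fst x) (snd x)) ?P + L2_set (\<lambda>x. - Y (fst x) (snd x)) ?P"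
        by (rule L2_set_triangle_ineq)
      also have "L2_set (\<lambda>x. - Y (fst x) (snd x)) ?P = L2_set (\<lambda>x. Y (fst x) (snd x)) ?P"
        unfolding L2_set_def by simp
      also have "poly_norm ppoly \<le> poly_norm rpoly + poly_norm dpoly"
        unfolding ppoly_def by (rule poly_norm_add)
      hence "L2_set (\<lambda>x. X (fst x) (snd x)) ?P + L2_set (\<lambda>x. Y (fst x) (snd x)) ?P
          \<le> real n * \<delta> + poly_norm rpoly + (real n - 1) * \<delta> * poly_norm fR"
        using Lx Ly Ld by linarith
      also have "\<dots> < \<sigma>"
      proof -
        have n1: "real n \<ge> 1" using npos by simp
        have sq1: "sqrt (real n) \<ge> 1" using n1 by simp
        have pf: "poly_norm fR \<ge> 0" by (simp add: poly_norm_L2)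
        define den where "den = real n + (real n - 1) * sqrt (real n) * poly_norm fR"
        have den0: "den > 0" unfolding den_def using n1 sq1 pf by (simp add: add_pos_nonneg)
        have "\<delta> < (\<sigma> - poly_norm rpoly) / den"
          using h\<delta> unfolding den_def rpoly_def fR_def gR_def by simp
        hence "\<delta> * den < \<sigma> - poly_norm rpoly" using den0 by (simp add: pos_less_divide_eq)
        moreover have "(real n - 1) * \<delta> * poly_norm fR \<le> (real n - 1) * sqrt (real n) * poly_norm fR * \<delta>"
        proof -
          have "(real n - 1) * poly_norm fR * \<delta> * 1 \<le> (real n - 1) * poly_norm fR * \<delta> * sqrt (real n)"
            by (rule mult_left_mono[OF sq1]) (use n1 pf h\<delta>0 in simp)
          thus ?thesis by (simp add: algebra_simps)
        qed
        ultimately show ?thesis unfolding den_def by (simp add: algebra_simps)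
      qed
      finally show ?thesis .
    qed
    have Msym: "transpose_mat M = M"
    proof (rule eq_matI)
      fix i j assume "i < dim_row M" "j < dim_col M"
      hence ij: "i < n" "j < n" using MC by auto
      have "Q $$ (i,j) = Q $$ (j,i)" using ij by (simp add: Qidx Qbsym add.commute)
      thus "transpose_mat M $$ (i, j) = M $$ (i, j)" using ij QC unfolding M_def by simp
    qed (use MC in auto)
    show ?thesis unfolding pos_def_mat_def symmetric_mat_def M_def[symmetric]
    proof (intro conjI ballI impI)
      show "M \<in> carrier_mat n n" by (rule MC)
      show "transpose_mat M = M" by (rule Msym)
      fix v :: "real vec" assume v: "v \<in> carrier_vec n" and v0: "v \<noteq> 0\<^sub>v n"
      define u where "u i = v $ i" for i
      define S where "S = (\<Sum>i<n. (u i)^2)"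
      have S0: "S > 0"
      proof -
        obtain i where i: "i < n" "v $ i \<noteq> 0"
          using v v0 by (metis carrier_vecD eq_vecI index_zero_vec(1) index_zero_vec(2))
        have "(u i)^2 > 0" using i unfolding u_def by simp
        moreover have "(u i)^2 \<le> S" unfolding S_def by (rule member_le_sum) (use i in auto)
        ultimately show ?thesis by linarith
      qed
      have "v \<bullet> (M *\<^sub>v v) = qf M n u" unfolding quad_form_sum[OF MC v] qf_def u_def ..
      also have "\<dots> = qf Qs n u + (\<Sum>i<n. u i * (\<Sum>j<n. D i j * u j))"
        unfolding qf_def D_def by (simp add: algebra_simps sum.distrib sum_subtractf)
      finally have eq: "v \<bullet> (M *\<^sub>v v) = qf Qs n u + (\<Sum>i<n. u i * (\<Sum>j<n. D i j * u j))" .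
      have "\<sigma> * S \<le> qf Qs n u" unfolding S_def by (rule min_eig_quad[OF QsC Qssym h\<sigma>(2)])
      moreover have "\<bar>\<Sum>i<n. u i * (\<Sum>j<n. D i j * u j)\<bar> \<le> L2_set (\<lambda>x. D (fst x) (snd x)) ?P * S"
        unfolding S_def by (rule perturb_bound)
      moreover have "L2_set (\<lambda>x. D (fst x) (snd x)) ?P * S < \<sigma> * S"
        using LD S0 by simp
      ultimately show "0 < v \<bullet> (M *\<^sub>v v)" unfolding eq by linarith
    qed
  qed
  show "let Q = proj_mat n (g - q * f) Qb in
              symmetric_mat n Q \<and> g = quad_poly Q + q * f
              \<and> pos_def_mat n (map_mat of_rat Q)"
    using symQ quadQ posdef unfolding Q_def p_def Let_def by simp
qed

end
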